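(* Assume $\mathrm{recc}(C)\subseteq\mathrm{recc}(P^B)$. Fix $k\in N_2$ and assume $N_0\not\subseteq J$. If $M'=\emptyset$, then $\mathrm{cl}\,\mathrm{conv}(P^B\setminus S_k^C)=P^B$.
   Context: Let $A\in\mathbb{R}^{m\times n}$ have full row rank, $b\in\mathbb{R}^m$, and $P=\{x\in\mathbb{R}^n_+:Ax=b\}$. Let $C\subseteq\mathbb{R}^n$ be an open convex set. Fix a basis $B$ of $P$ with nonbasic set $N=\{1,\dots,n\}\setminus B$. Write $P=\{x:x_i=\bar b_i-\sum_{j\in N}\bar a_{ij}x_j\ (i\in B),\ x\ge0\}$ with $\bar b\ge0$. The basic solution $\bar x$ has $\bar x_i=\bar b_i$ ($i\in B$) and $0$ ($i\in N$). $P^B$ is obtained by dropping $x_i\ge0$ for $i\in B$. For $j\in N$, $\bar r^j$ has $\bar r^j_k=-\bar a_{kj}$ ($k\in B$), $\bar r^j_j=1$, and $0$ otherwise. Thus $P^B=\{\bar x+\sum_{j\in N}x_j\bar r^j:x_j\ge0\}$. It is assumed that $\bar x\notin\mathrm{cl}(C)$. For $j\in N$, $\alpha_j=\inf\{\lambda\ge0:\bar x+\lambda\bar r^j\in C\}$ and $\beta_j=\sup\{\lambda\ge0:\bar x+\lambda\bar r^j\in C\}$, with $\alpha_j=+\infty$, $\beta_j=-\infty$ if the halfline misses $C$. Define - $N_0=\{j:\alpha_j=+\infty,\beta_j=-\infty\}$; - $N_2=\{j:\alpha_j\in(0,\infty),\beta_j\in(\alpha_j,\infty)\}$. For a set $K$,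 $\mathrm{recc}(K)=\{d:x+\lambda d\in K\ \forall x\in K,\lambda\ge0\}$. For $k\in N_2$, $S_k^C=\{\bar x\}+\mathrm{conv}\big(\bigcup_{j\in N_2}\{\lambda\bar r^j:0\le\lambda<\beta_j\}\big)+\{\lambda\bar r^k:\lambda\le0\}+\mathrm{recc}(C)$. Let $J=\{i\in N:\bar r^i\in\mathrm{recc}(S_k^C)\}$. For $i\in J$, $j\in N\setminus J$, $\gamma'_{ij}=\sup\{\gamma\ge0:\bar r^i+\gamma\bar r^j\in\mathrm{recc}(S_k^C)\}$. Let $M'=\{i\in J:\gamma'_{ij}>0\ \forall j\in N\setminus J\}$. Here $\mathrm{cl}\,\mathrm{conv}$ is the closure of the convex hull. *)

theory Defs
  imports "HOL-Analysis.Analysis" "HOL-Library.Extended_Real"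
begin

definition std_poly :: "real^'n^'m \<Rightarrow> real^'m \<Rightarrow> (real^'n) set" where
  "std_poly A b = {x. (\<forall>i. 0 \<le> x $ i) \<and> A *v x = b}"

definition basic_solution :: "real^'n^'m \<Rightarrow> real^'m \<Rightarrow> 'n set \<Rightarrow> real^'n" where
  "basic_solution A b B = (THE x. A *v x = b \<and> (\<forall>j. j \<notin> B \<longrightarrow> x $ j = 0))"

definition is_basis :: "real^'n^'m \<Rightarrow> real^'m \<Rightarrow> 'n set \<Rightarrow> bool" where
  "is_basis A b B \<longleftrightarrow> card B = CARD('m) \<and> inj_on (\<lambda>j. column j A) B
     \<and> independent ((\<lambda>j. column j A) ` B)
     \<and> (\<forall>i. 0 \<le> basic_solution A b B $ i)"

text \<open>The ray r^j (j nonbasic): r_j = 1, r_k = 0 for other nonbasic k, and the basic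
  components are - abar_{kj}, i.e. exactly those making A r = 0.\<close>

definition basis_ray :: "real^'n^'m \<Rightarrow> 'n set \<Rightarrow> 'n \<Rightarrow> real^'n" where
  "basis_ray A B j = (THE r. A *v r = 0 \<and> r $ j = 1 \<and> (\<forall>k. k \<notin> B \<and> k \<noteq> j \<longrightarrow> r $ k = 0))"

definition basis_relax :: "real^'n^'m \<Rightarrow> real^'m \<Rightarrow> 'n set \<Rightarrow> (real^'n) set" where
  "basis_relax A b B = {x. A *v x = b \<and> (\<forall>j. j \<notin> B \<longrightarrow> 0 \<le> x $ j)}"

definition recc :: "('a::real_vector) set \<Rightarrow> 'a set" where
  "recc K = {d. \<forall>x\<in>K. \<forall>t::real. 0 \<le> t \<longrightarrow> x + t *\<^sub>R d \<in> K}"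

text \<open>alpha_j, beta_j as extended reals: Inf of the empty set is +infinity, Sup of the
  empty set is -infinity, matching the stated conventions.\<close>

definition alpha_C :: "('a::real_vector) set \<Rightarrow> 'a \<Rightarrow> 'a \<Rightarrow> ereal" where
  "alpha_C C x r = Inf (ereal ` {t. 0 \<le> t \<and> x + t *\<^sub>R r \<in> C})"

definition beta_C :: "('a::real_vector) set \<Rightarrow> 'a \<Rightarrow> 'a \<Rightarrow> ereal" where
  "beta_C C x r = Sup (ereal ` {t. 0 \<le> t \<and> x + t *\<^sub>R r \<in> C})"

definition N0_set :: "real^'n^'m \<Rightarrow> real^'m \<Rightarrow> 'n set \<Rightarrow> (real^'n) set \<Rightarrow> 'n set" where
  "N0_set A b B C = {j. j \<notin> B \<and>
     alpha_C C (basic_solution A b B) (basis_ray A B j) = \<infinity> \<and>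
     beta_C C (basic_solution A b B) (basis_ray A B j) = -\<infinity>}"

definition N2_set :: "real^'n^'m \<Rightarrow> real^'m \<Rightarrow> 'n set \<Rightarrow> (real^'n) set \<Rightarrow> 'n set" where
  "N2_set A b B C = {j. j \<notin> B \<and>
     (let a = alpha_C C (basic_solution A b B) (basis_ray A B j);
          be = beta_C C (basic_solution A b B) (basis_ray A B j)
      in 0 < a \<and> a < \<infinity> \<and> a < be \<and> be < \<infinity>)}"

definition S_kC :: "real^'n^'m \<Rightarrow> real^'m \<Rightarrow> 'n set \<Rightarrow> (real^'n) set \<Rightarrow> 'n \<Rightarrow> (real^'n) set" where
  "S_kC A b B C k =
     {basic_solution A b B + y + \<mu> *\<^sub>R basis_ray A B k + d | y \<mu> d.
        y \<in> convex hull (\<Union>j\<in>N2_set A b B C.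
               {t *\<^sub>R basis_ray A B j | t. 0 \<le> t \<and>
                  ereal t < beta_C C (basic_solution A b B) (basis_ray A B j)})
        \<and> \<mu> \<le> 0 \<and> d \<in> recc C}"

definition J_set :: "real^'n^'m \<Rightarrow> real^'m \<Rightarrow> 'n set \<Rightarrow> (real^'n) set \<Rightarrow> 'n \<Rightarrow> 'n set" where
  "J_set A b B C k = {i. i \<notin> B \<and> basis_ray A B i \<in> recc (S_kC A b B C k)}"

definition gamma' :: "real^'n^'m \<Rightarrow> real^'m \<Rightarrow> 'n set \<Rightarrow> (real^'n) set \<Rightarrow> 'n \<Rightarrow> 'n \<Rightarrow> 'n \<Rightarrow> ereal" where
  "gamma' A b B C k i j = Sup (ereal ` {g. 0 \<le> g \<and>
      basis_ray A B i + g *\<^sub>R basis_ray A B j \<in> recc (S_kC A b B C k)})"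

definition M'_set :: "real^'n^'m \<Rightarrow> real^'m \<Rightarrow> 'n set \<Rightarrow> (real^'n) set \<Rightarrow> 'n \<Rightarrow> 'n set" where
  "M'_set A b B C k = {i \<in> J_set A b B C k. \<forall>j. j \<notin> B \<and> j \<notin> J_set A b B C k \<longrightarrow>
      gamma' A b B C k i j > 0}"

end

theory Submission
  imports Defs
begin
lemma cols_span:
  fixes A :: "real^'n^'m"
  assumes "is_basis A b B"
  shows "u \<in> span ((\<lambda>j. column j A) ` B)"
proof -
  let ?S = "(\<lambda>j. column j A) ` B"
  have ind: "independent ?S" and inj: "inj_on (\<lambda>j. column j A) B" and cB: "card B = CARD('m)"
    using assms by (auto simp: is_basis_def)
  have "card ?S = CARD('m)" using inj cB by (simp add: card_image)
  hence "card ?S = dim (UNIV :: (real^'m) set)" by simp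
  hence "UNIV \<subseteq> span ?S" using card_eq_dim[of ?S UNIV] ind by auto
  thus ?thesis by auto
qed

lemma exists_sol:
  fixes A :: "real^'n^'m"
  assumes "is_basis A b B"
  shows "\<exists>x. A *v x = u \<and> (\<forall>i. i \<notin> B \<longrightarrow> x $ i = 0)"
proof -
  let ?f = "(\<lambda>j. column j A)"
  let ?S = "?f ` B"
  have inj: "inj_on ?f B" using assms by (auto simp: is_basis_def)
  have "u \<in> span ?S" by (rule cols_span[OF assms])
  then obtain c where c: "u = (\<Sum>w\<in>?S. c w *\<^sub>R w)"
    using span_finite[of ?S] by auto
  define x where "x = (\<chi> i. if i \<in> B then c (?f i) else 0)"
  have "A *v x = (\<Sum>i\<in>UNIV. (x$i) *s column i A)" by (rule matrix_mult_sum)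
  also have "\<dots> = (\<Sum>i\<in>B. (x$i) *s column i A)"
    by (rule sum.mono_neutral_right) (auto simp: x_def)
  also have "\<dots> = (\<Sum>i\<in>B. c (?f i) *\<^sub>R ?f i)"
    by (rule sum.cong) (auto simp: x_def scalar_mult_eq_scaleR)
  also have "\<dots> = (\<Sum>w\<in>?S. c w *\<^sub>R w)" using sum.reindex[OF inj, of "\<lambda>w. c w *\<^sub>R w"] by simp
  finally show ?thesis using c by (auto simp: x_def)
qed

lemma uniq_sol:
  fixes A :: "real^'n^'m"
  assumes "is_basis A b B" "A *v v = 0" "\<forall>i. i \<notin> B \<longrightarrow> v $ i = 0"
  shows "v = 0"
proof -
  let ?f = "(\<lambda>j. column j A)"
  let ?S = "?f ` B"
  have inj: "inj_on ?f B" and ind: "independent ?S" using assms by (auto simp: is_basis_def)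
  define u where "u = (\<lambda>w. v $ (inv_into B ?f w))"
  have "0 = (\<Sum>i\<in>UNIV. (v$i) *s column i A)" using assms(2) matrix_mult_sum[of A v] by simp
  also have "\<dots> = (\<Sum>i\<in>B. (v$i) *s column i A)"
    by (rule sum.mono_neutral_right) (auto simp: assms(3))
  also have "\<dots> = (\<Sum>i\<in>B. u (?f i) *\<^sub>R ?f i)"
    by (rule sum.cong) (auto simp: u_def scalar_mult_eq_scaleR inv_into_f_f[OF inj])
  also have "\<dots> = (\<Sum>w\<in>?S. u w *\<^sub>R w)" using sum.reindex[OF inj, of "\<lambda>w. u w *\<^sub>R w"] by simp
  finally have z: "(\<Sum>w\<in>?S. u w *\<^sub>R w) = 0" by simp
  have "\<forall>i\<in>B. v $ i = 0"
  proof
    fix i assume i: "i \<in> B"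
    have "u (?f i) = 0" using independentD[OF ind _ _ z, of "?f i"] i by auto
    thus "v $ i = 0" using i by (simp add: u_def inv_into_f_f[OF inj])
  qed
  thus ?thesis using assms(3) by (auto simp: vec_eq_iff)
qed

lemma xb_props:
  fixes A :: "real^'n^'m"
  assumes "is_basis A b B"
  shows "A *v basic_solution A b B = b \<and> (\<forall>i. i \<notin> B \<longrightarrow> basic_solution A b B $ i = 0)"
proof -
  have "\<exists>!x. A *v x = b \<and> (\<forall>j. j \<notin> B \<longrightarrow> x $ j = 0)"
  proof (rule ex_ex1I)
    show "\<exists>x. A *v x = b \<and> (\<forall>j. j \<notin> B \<longrightarrow> x $ j = 0)" by (rule exists_sol[OF assms])
  next
    fix x y assume "A *v x = b \<and> (\<forall>j. j \<notin> B \<longrightarrow> x $ j = 0)" "A *v y = b \<and> (\<forall>j. j \<notin> B \<longrightarrow> y $ j = 0)"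
    hence "x - y = 0" by (intro uniq_sol[OF assms]) (auto simp: matrix_vector_mult_diff_distrib)
    thus "x = y" by simp
  qed
  from theI'[OF this] show ?thesis unfolding basic_solution_def by blast
qed

lemma ray_props:
  fixes A :: "real^'n^'m"
  assumes "is_basis A b B" "j \<notin> B"
  shows "A *v basis_ray A B j = 0 \<and> basis_ray A B j $ j = 1 \<and> (\<forall>k. k \<notin> B \<and> k \<noteq> j \<longrightarrow> basis_ray A B j $ k = 0)"
proof -
  have "\<exists>!r. A *v r = 0 \<and> r $ j = 1 \<and> (\<forall>k. k \<notin> B \<and> k \<noteq> j \<longrightarrow> r $ k = 0)"
  proof (rule ex_ex1I)
    obtain x where x: "A *v x = - column j A" "\<forall>i. i \<notin> B \<longrightarrow> x $ i = 0"
      using exists_sol[OF assms(1)] by blast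
    have "A *v (x + axis j 1) = 0" using x(1) by (simp add: matrix_vector_right_distrib matrix_vector_mult_basis)
    moreover have "(x + axis j 1) $ j = 1" using x(2) assms(2) by (simp add: axis_def)
    moreover have "\<forall>k. k \<notin> B \<and> k \<noteq> j \<longrightarrow> (x + axis j 1) $ k = 0" using x(2) by (simp add: axis_def)
    ultimately show "\<exists>r. A *v r = 0 \<and> r $ j = 1 \<and> (\<forall>k. k \<notin> B \<and> k \<noteq> j \<longrightarrow> r $ k = 0)" by blast
  next
    fix x y assume "A *v x = 0 \<and> x $ j = 1 \<and> (\<forall>k. k \<notin> B \<and> k \<noteq> j \<longrightarrow> x $ k = 0)"
      "A *v y = 0 \<and> y $ j = 1 \<and> (\<forall>k. k \<notin> B \<and> k \<noteq> j \<longrightarrow> y $ k = 0)"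
    hence "x - y = 0" 
      apply (intro uniq_sol[OF assms(1)])
       apply (auto simp: matrix_vector_mult_diff_distrib)
      subgoal for i by (cases "i = j") auto
      done
    thus "x = y" by simp
  qed
  from theI'[OF this] show ?thesis unfolding basis_ray_def by blast
qed

lemma ray_coord:
  fixes A :: "real^'n^'m"
  assumes "is_basis A b B" "j \<notin> B" "i \<notin> B"
  shows "basis_ray A B j $ i = (if i = j then 1 else 0)"
  using ray_props[OF assms(1,2)] assms(3) by auto

lemma ray_ker:
  fixes A :: "real^'n^'m"
  assumes "is_basis A b B" "j \<notin> B"
  shows "A *v basis_ray A B j = 0"
  using ray_props[OF assms(1,2)] by auto

lemma mv_sum:
  fixes A :: "real^'n^'m"
  shows "A *v (\<Sum>i\<in>S. f i) = (\<Sum>i\<in>S. A *v f i)"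
proof (induction S rule: infinite_finite_induct)
  case (insert x F) thus ?case by (simp add: matrix_vector_right_distrib)
qed auto

lemma ker_rep:
  fixes A :: "real^'n^'m"
  assumes "is_basis A b B" "A *v v = 0"
  shows "v = (\<Sum>i\<in>-B. (v $ i) *\<^sub>R basis_ray A B i)"
proof -
  let ?s = "(\<Sum>i\<in>-B. (v $ i) *\<^sub>R basis_ray A B i)"
  have "A *v ?s = (\<Sum>i\<in>-B. (v $ i) *\<^sub>R (A *v basis_ray A B i))"
    by (simp add: mv_sum matrix_vector_mult_scaleR)
  also have "\<dots> = 0"
    by (rule sum.neutral) (simp add: ray_ker[OF assms(1)])
  finally have "A *v (v - ?s) = 0" using assms(2) by (simp add: matrix_vector_mult_diff_distrib)
  moreover have "\<forall>i. i \<notin> B \<longrightarrow> (v - ?s) $ i = 0"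
  proof (intro allI impI)
    fix i assume i: "i \<notin> B"
    have "?s $ i = (\<Sum>l\<in>-B. (v $ l) * (basis_ray A B l $ i))"
      by simp
    also have "\<dots> = (\<Sum>l\<in>-B. (if l = i then v $ i else 0))"
      by (rule sum.cong) (auto simp: ray_coord[OF assms(1) _ i])
    also have "\<dots> = v $ i" using i by simp
    finally show "(v - ?s) $ i = 0" by simp
  qed
  ultimately have "v - ?s = 0" by (rule uniq_sol[OF assms(1)])
  thus ?thesis by simp
qed

lemma recc_add:
  assumes "d1 \<in> recc K" "d2 \<in> recc K" shows "d1 + d2 \<in> recc K"
  unfolding recc_def
proof (intro CollectI ballI allI impI)
  fix x and t :: real assume x: "x \<in> K" and t: "0 \<le> t"
  hence "x + t *\<^sub>R d1 \<in> K" using assms(1) unfolding recc_def by blast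
  hence "(x + t *\<^sub>R d1) + t *\<^sub>R d2 \<in> K" using assms(2) t unfolding recc_def by blast
  thus "x + t *\<^sub>R (d1 + d2) \<in> K" by (simp add: scaleR_right_distrib add.assoc)
qed

lemma recc_scale: "d \<in> recc K \<Longrightarrow> 0 \<le> c \<Longrightarrow> c *\<^sub>R d \<in> recc K"
  unfolding recc_def by (auto simp: mult_nonneg_nonneg)

lemma recc_zero: "0 \<in> recc K"
  unfolding recc_def by auto

lemma N2_beta_top:
  fixes A :: "real^'n^'m"
  shows "j \<in> N2_set A b B C \<Longrightarrow> 0 < beta_C C (basic_solution A b B) (basis_ray A B j) \<and> beta_C C (basic_solution A b B) (basis_ray A B j) < \<infinity>"
proof -
  let ?a = "alpha_C C (basic_solution A b B) (basis_ray A B j)"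
  let ?b = "beta_C C (basic_solution A b B) (basis_ray A B j)"
  assume "j \<in> N2_set A b B C"
  hence h: "0 < ?a \<and> ?a < \<infinity> \<and> ?a < ?b \<and> ?b < \<infinity>"
    unfolding N2_set_def Let_def by blast
  hence "0 < ?b" using order.strict_trans[of 0 ?a ?b] by blast
  thus ?thesis using h by blast
qed

lemma HL:
  fixes Q :: "'a::real_normed_vector set"
  assumes cQ: "closed Q" and vQ: "convex Q" and hl: "\<forall>s\<ge>s0. p + s *\<^sub>R v \<in> Q"
    and x: "x \<in> Q" and t: "0 \<le> t"
  shows "x + t *\<^sub>R v \<in> Q"
proof (cases "t = 0")
  case True thus ?thesis using x by simp
next
  case False
  hence tp: "t > 0" using t by simp
  define s1 where "s1 = max s0 1"
  have s1: "s1 > 0" "s1 \<ge> s0" by (auto simp: s1_def)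
  let ?f = "\<lambda>l::real. (1 - l) *\<^sub>R x + l *\<^sub>R p + t *\<^sub>R v"
  have lim: "(?f \<longlongrightarrow> ?f 0) (at_right 0)"
    by (intro tendsto_intros)
  have ev: "eventually (\<lambda>l. ?f l \<in> Q) (at_right 0)"
    unfolding eventually_at_right_field
  proof (intro exI[of _ "min 1 (t / s1)"] conjI allI impI)
    show "(0::real) < min 1 (t / s1)" using tp s1 by simp
    fix l :: real assume l: "0 < l" "l < min 1 (t / s1)"
    have "l * s1 < t" using l s1 by (simp add: pos_less_divide_eq mult.commute)
    hence "s1 \<le> t / l" using l by (simp add: pos_le_divide_eq mult.commute)
    hence "s0 \<le> t / l" using s1 by linarith
    hence pq: "p + (t / l) *\<^sub>R v \<in> Q" using hl by blast
    have "(1 - l) *\<^sub>R x + l *\<^sub>R (p + (t / l) *\<^sub>R v) \<in> Q"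
      using convexD[OF vQ x pq, of "1 - l" l] l by simp
    moreover have "(1 - l) *\<^sub>R x + l *\<^sub>R (p + (t / l) *\<^sub>R v) = ?f l"
      using l by (simp add: scaleR_add_right)
    ultimately show "?f l \<in> Q" by simp
  qed
  have "?f 0 \<in> Q" by (rule Lim_in_closed_set[OF cQ ev _ lim]) simp
  thus ?thesis by simp
qed

locale setting =
  fixes A :: "real^'n^'m" and b :: "real^'m" and B :: "'n set" and C :: "(real^'n) set" and k :: 'n
  assumes basis: "is_basis A b B"
    and reccC: "recc C \<subseteq> recc (basis_relax A b B)"
    and kN2: "k \<in> N2_set A b B C"
begin

abbreviation "xb \<equiv> basic_solution A b B"
abbreviation "r \<equiv> basis_ray A B"
abbreviation "S \<equiv> S_kC A b B C k"
abbreviation "P \<equiv> basis_relax A b B"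
abbreviation "N2 \<equiv> N2_set A b B C"
abbreviation "J \<equiv> J_set A b B C k"
abbreviation "beta j \<equiv> beta_C C xb (r j)"
definition "bnd j = (if j \<in> N2 then real_of_ereal (beta j) else 0)"

lemma kB: "k \<notin> B"
  using kN2 by (simp add: N2_set_def)

lemma N2_beta: "j \<in> N2 \<Longrightarrow> 0 < beta j \<and> beta j < \<infinity>"
  by (rule N2_beta_top)

lemma bnd_nonneg: "0 \<le> bnd j"
proof (cases "j \<in> N2")
  case True
  hence "0 \<le> beta j" using N2_beta[OF True] by (simp add: order.strict_implies_order)
  thus ?thesis using True unfolding bnd_def by (simp add: real_of_ereal_pos)
qed (simp add: bnd_def)

lemma xb_P: "xb \<in> P"
  using xb_props[OF basis] unfolding basis_relax_def by auto

lemma xb_coord: "i \<notin> B \<Longrightarrow> xb $ i = 0"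
  using xb_props[OF basis] by auto

lemma reccC_props: "d \<in> recc C \<Longrightarrow> A *v d = 0 \<and> (\<forall>i. i \<notin> B \<longrightarrow> 0 \<le> d $ i)"
proof -
  assume "d \<in> recc C"
  hence "d \<in> recc P" using reccC by blast
  hence all: "\<forall>x\<in>P. \<forall>t::real. 0 \<le> t \<longrightarrow> x + t *\<^sub>R d \<in> P" by (simp add: recc_def)
  have "xb + 1 *\<^sub>R d \<in> P" using all[rule_format, OF xb_P, of 1] by simp
  hence h: "A *v (xb + d) = b" "\<forall>i. i \<notin> B \<longrightarrow> 0 \<le> (xb + d) $ i"
    unfolding basis_relax_def by simp_all
  have "A *v xb + A *v d = b" using h(1) by (simp only: matrix_vector_right_distrib)
  hence "A *v d = 0" using xb_props[OF basis] by simp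
  moreover have "\<forall>i. i \<notin> B \<longrightarrow> 0 \<le> d $ i" using h(2) xb_coord by simp
  ultimately show ?thesis by blast
qed

lemma P_intro: "A *v z = 0 \<Longrightarrow> (\<forall>i. i \<notin> B \<longrightarrow> 0 \<le> z $ i) \<Longrightarrow> xb + z \<in> P"
  using xb_props[OF basis] by (auto simp: basis_relax_def matrix_vector_right_distrib)

lemma L1:
  assumes "v + \<nu> *\<^sub>R r k \<in> recc C" "0 \<le> \<nu>"
  shows "v \<in> recc S"
  unfolding recc_def
proof (intro CollectI ballI allI impI)
  fix s and t :: real assume s: "s \<in> S" and t: "0 \<le> t"
  then obtain y \<mu> d where e: "s = xb + y + \<mu> *\<^sub>R r k + d"
    and y: "y \<in> convex hull (\<Union>j\<in>N2. {t *\<^sub>R r j | t. 0 \<le> t \<and> ereal t < beta j})"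
    and \<mu>: "\<mu> \<le> 0" and d: "d \<in> recc C"
    unfolding S_kC_def by blast
  have d2: "d + t *\<^sub>R (v + \<nu> *\<^sub>R r k) \<in> recc C"
    by (rule recc_add[OF d recc_scale[OF assms(1) t]])
  have "s + t *\<^sub>R v = xb + y + (\<mu> - t * \<nu>) *\<^sub>R r k + (d + t *\<^sub>R (v + \<nu> *\<^sub>R r k))"
    unfolding e by (simp add: algebra_simps)
  moreover have "\<mu> - t * \<nu> \<le> 0" using \<mu> t assms(2) mult_nonneg_nonneg[of t \<nu>] by linarith
  ultimately show "s + t *\<^sub>R v \<in> S" unfolding S_kC_def using y d2 by blast
qed

lemma reccC_reccS: "d \<in> recc C \<Longrightarrow> d \<in> recc S"
  using L1[of d 0] by simp

lemma Y_props:
  assumes "y \<in> convex hull (\<Union>j\<in>N2. {t *\<^sub>R r j | t. 0 \<le> t \<and> ereal t < beta j})"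
  shows "A *v y = 0 \<and> (\<forall>i. i \<notin> B \<longrightarrow> 0 \<le> y $ i \<and> y $ i \<le> bnd i)"
proof -
  let ?Y = "{y. A *v y = 0 \<and> (\<forall>i. i \<notin> B \<longrightarrow> 0 \<le> y $ i \<and> y $ i \<le> bnd i)}"
  have cY: "convex ?Y"
    unfolding convex_def
  proof (intro ballI allI impI CollectI conjI)
    fix x z and u v :: real assume x: "x \<in> ?Y" and z: "z \<in> ?Y" and uv: "0 \<le> u" "0 \<le> v" "u + v = 1"
    show "A *v (u *\<^sub>R x + v *\<^sub>R z) = 0" using x z
      by (simp add: matrix_vector_right_distrib matrix_vector_mult_scaleR)
    fix i assume i: "i \<notin> B"
    have "0 \<le> x $ i" "x $ i \<le> bnd i" "0 \<le> z $ i" "z $ i \<le> bnd i" using x z i by auto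
    hence "u * x $ i \<le> u * bnd i" "v * z $ i \<le> v * bnd i" "0 \<le> u * x $ i" "0 \<le> v * z $ i"
      using uv by (auto intro: mult_left_mono)
    hence "u * x $ i + v * z $ i \<le> (u + v) * bnd i" "0 \<le> u * x $ i + v * z $ i"
      by (auto simp: distrib_right)
    thus "0 \<le> (u *\<^sub>R x + v *\<^sub>R z) $ i" "(u *\<^sub>R x + v *\<^sub>R z) $ i \<le> bnd i" using uv by auto
  qed
  have "(\<Union>j\<in>N2. {t *\<^sub>R r j | t. 0 \<le> t \<and> ereal t < beta j}) \<subseteq> ?Y"
  proof
    fix w assume "w \<in> (\<Union>j\<in>N2. {t *\<^sub>R r j | t. 0 \<le> t \<and> ereal t < beta j})"
    then obtain j t where j: "j \<in> N2" and t: "0 \<le> t" "ereal t < beta j" and w: "w = t *\<^sub>R r j" by blast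
    have jB: "j \<notin> B" using j by (simp add: N2_set_def)
    have "t \<le> real_of_ereal (beta j)" using N2_beta[OF j] t(2)
      by (cases "beta j") auto
    hence tb: "t \<le> bnd j" using j by (simp add: bnd_def)
    show "w \<in> ?Y"
      using w t tb bnd_nonneg ray_ker[OF basis jB] ray_coord[OF basis jB]
      by (auto simp: matrix_vector_mult_scaleR)
  qed
  hence "convex hull (\<Union>j\<in>N2. {t *\<^sub>R r j | t. 0 \<le> t \<and> ereal t < beta j}) \<subseteq> ?Y"
    using cY by (simp add: hull_minimal)
  thus ?thesis using assms by blast
qed

lemma S_elim:
  assumes "z \<in> S"
  obtains y \<mu> d where "z = xb + y + \<mu> *\<^sub>R r k + d" "A *v y = 0"
    "\<forall>i. i \<notin> B \<longrightarrow> 0 \<le> y $ i \<and> y $ i \<le> bnd i" "\<mu> \<le> 0" "d \<in> recc C"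
  using assms Y_props unfolding S_kC_def by blast

lemma xb_S: "xb \<in> S"
proof -
  have "0 < beta k" using N2_beta[OF kN2] by simp
  hence "(0::real^'n) \<in> (\<Union>j\<in>N2. {t *\<^sub>R r j | t. 0 \<le> t \<and> ereal t < beta j})"
    using kN2 by (auto intro!: bexI[of _ k] exI[of _ 0] simp: zero_ereal_def)
  hence "(0::real^'n) \<in> convex hull (\<Union>j\<in>N2. {t *\<^sub>R r j | t. 0 \<le> t \<and> ereal t < beta j})"
    by (rule hull_inc)
  hence "xb + 0 + 0 *\<^sub>R r k + 0 \<in> S" unfolding S_kC_def using recc_zero by blast
  thus ?thesis by simp
qed

lemma rk_not_reccC: "r k \<notin> recc C"
proof
  assume rc: "r k \<in> recc C"
  let ?T = "{t. 0 \<le> t \<and> xb + t *\<^sub>R r k \<in> C}"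
  have "alpha_C C xb (r k) < \<infinity>" using kN2 unfolding N2_set_def Let_def by blast
  moreover have "alpha_C C xb (r k) = \<infinity>" if h: "?T = {}"
  proof -
    have "alpha_C C xb (r k) = Inf (ereal ` {})" unfolding alpha_C_def h by (rule refl)
    thus ?thesis by (simp add: top_ereal_def)
  qed
  ultimately have "?T \<noteq> {}" by auto
  then obtain t0 where t0: "0 \<le> t0" "xb + t0 *\<^sub>R r k \<in> C" by blast
  have "ereal x \<le> beta k" for x
  proof -
    have "(xb + t0 *\<^sub>R r k) + \<bar>x\<bar> *\<^sub>R r k \<in> C" using rc t0 unfolding recc_def by auto
    hence "t0 + \<bar>x\<bar> \<in> ?T" using t0 by (simp add: algebra_simps)
    hence "ereal (t0 + \<bar>x\<bar>) \<le> beta k" unfolding beta_C_def by (auto intro: Sup_upper)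
    moreover have "ereal x \<le> ereal (t0 + \<bar>x\<bar>)" using t0 by simp
    ultimately show ?thesis by (rule order.trans[rotated])
  qed
  hence "beta k = \<infinity>" by (rule ereal_top)
  thus False using N2_beta[OF kN2] by simp
qed


lemma supp_rep:
  assumes "A *v d = 0" "F \<subseteq> -B" "\<forall>i. i \<notin> B \<and> i \<notin> F \<longrightarrow> d $ i = 0"
  shows "d = (\<Sum>i\<in>F. (d $ i) *\<^sub>R r i)"
proof -
  have "d = (\<Sum>i\<in>-B. (d $ i) *\<^sub>R r i)" by (rule ker_rep[OF basis assms(1)])
  also have "\<dots> = (\<Sum>i\<in>F. (d $ i) *\<^sub>R r i)"
    by (rule sum.mono_neutral_right) (use assms in auto)
  finally show ?thesis .
qed

lemma rc: "j \<notin> B \<Longrightarrow> i \<notin> B \<Longrightarrow> r j $ i = (if i = j then 1 else 0)"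
  by (rule ray_coord[OF basis])

lemma H1k:
  assumes t: "t > bnd k"
  shows "xb + t *\<^sub>R r k \<notin> S"
proof
  assume "xb + t *\<^sub>R r k \<in> S"
  then obtain y \<mu> d where e: "xb + t *\<^sub>R r k = xb + y + \<mu> *\<^sub>R r k + d" and y: "A *v y = 0"
    "\<forall>i. i \<notin> B \<longrightarrow> 0 \<le> y $ i \<and> y $ i \<le> bnd i" and \<mu>: "\<mu> \<le> 0" and d: "d \<in> recc C"
    by (rule S_elim)
  have dp: "A *v d = 0" "\<forall>i. i \<notin> B \<longrightarrow> 0 \<le> d $ i" using reccC_props[OF d] by auto
  have "d = (xb + t *\<^sub>R r k) - (xb + y + \<mu> *\<^sub>R r k)" using e by simp
  also have "\<dots> = t *\<^sub>R r k - y - \<mu> *\<^sub>R r k" by (simp add: algebra_simps)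
  finally have dE: "d = t *\<^sub>R r k - y - \<mu> *\<^sub>R r k" .
  have dc: "d $ i = t * (if i = k then 1 else 0) - y $ i - \<mu> * (if i = k then 1 else 0)" if "i \<notin> B" for i
    using that kB by (simp add: dE rc)
  have z: "\<forall>i. i \<notin> B \<and> i \<notin> {k} \<longrightarrow> d $ i = 0"
  proof (intro allI impI)
    fix i assume i: "i \<notin> B \<and> i \<notin> {k}"
    hence "d $ i = - y $ i" using dc[of i] by simp
    moreover have "0 \<le> d $ i" "0 \<le> y $ i" using dp(2) y(2) i by auto
    ultimately show "d $ i = 0" by linarith
  qed
  have dr: "d = (d $ k) *\<^sub>R r k" using supp_rep[OF dp(1) _ z] kB by simp
  have "d $ k = t - y $ k - \<mu>" using dc[OF kB] by simp
  moreover have "y $ k \<le> bnd k" using y(2) kB by blast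
  ultimately have pos: "d $ k > 0" using \<mu> t by linarith
  have "(1 / d $ k) *\<^sub>R d \<in> recc C" using recc_scale[OF d] pos by simp
  hence "r k \<in> recc C" using pos by (subst (asm) dr) simp
  thus False using rk_not_reccC by simp
qed

lemma kJ: "k \<notin> J"
proof
  assume "k \<in> J"
  hence "r k \<in> recc S" by (simp add: J_set_def)
  hence all: "\<forall>x\<in>S. \<forall>t::real. 0 \<le> t \<longrightarrow> x + t *\<^sub>R r k \<in> S" by (simp add: recc_def)
  have "0 \<le> bnd k + 1" using bnd_nonneg[of k] by linarith
  hence "xb + (bnd k + 1) *\<^sub>R r k \<in> S" using all xb_S by blast
  thus False using H1k[of "bnd k + 1"] by simp
qed

lemma H1:
  assumes jB: "j \<notin> B" and jJ: "j \<notin> J" and t: "t > bnd j"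
  shows "xb + t *\<^sub>R r j \<notin> S"
proof (cases "j = k")
  case True thus ?thesis using H1k t by simp
next
  case jk: False
  show ?thesis
  proof
  assume "xb + t *\<^sub>R r j \<in> S"
  then obtain y \<mu> d where e: "xb + t *\<^sub>R r j = xb + y + \<mu> *\<^sub>R r k + d" and y: "A *v y = 0"
    "\<forall>i. i \<notin> B \<longrightarrow> 0 \<le> y $ i \<and> y $ i \<le> bnd i" and \<mu>: "\<mu> \<le> 0" and d: "d \<in> recc C"
    by (rule S_elim)
  have dp: "A *v d = 0" "\<forall>i. i \<notin> B \<longrightarrow> 0 \<le> d $ i" using reccC_props[OF d] by auto
  have "d = (xb + t *\<^sub>R r j) - (xb + y + \<mu> *\<^sub>R r k)" using e by simp
  also have "\<dots> = t *\<^sub>R r j - y - \<mu> *\<^sub>R r k" by (simp add: algebra_simps)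
  finally have dE: "d = t *\<^sub>R r j - y - \<mu> *\<^sub>R r k" .
  have dc: "d $ i = t * (if i = j then 1 else 0) - y $ i - \<mu> * (if i = k then 1 else 0)" if "i \<notin> B" for i
    using that kB jB by (simp add: dE rc)
  have z: "\<forall>i. i \<notin> B \<and> i \<notin> {j, k} \<longrightarrow> d $ i = 0"
  proof (intro allI impI)
    fix i assume i: "i \<notin> B \<and> i \<notin> {j, k}"
    hence "d $ i = - y $ i" using dc[of i] by simp
    moreover have "0 \<le> d $ i" "0 \<le> y $ i" using dp(2) y(2) i by auto
    ultimately show "d $ i = 0" by linarith
  qed
  have dr: "d = (d $ j) *\<^sub>R r j + (d $ k) *\<^sub>R r k" using supp_rep[OF dp(1) _ z] kB jB jk by simp
  have "d $ j = t - y $ j" using dc[OF jB] jk by simp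
  moreover have "y $ j \<le> bnd j" using y(2) jB by blast
  ultimately have pos: "d $ j > 0" using t by linarith
  have dk: "d $ k \<ge> 0" using dp(2) kB by simp
  have "(1 / d $ j) *\<^sub>R d \<in> recc C" using recc_scale[OF d] pos by simp
  moreover have "(1 / d $ j) *\<^sub>R d = r j + (d $ k / d $ j) *\<^sub>R r k"
    using pos by (subst dr) (simp add: scaleR_add_right)
  ultimately have "r j + (d $ k / d $ j) *\<^sub>R r k \<in> recc C" by simp
  hence "r j \<in> recc S" by (rule L1) (use pos dk in simp)
  thus False using jJ jB by (simp add: J_set_def)
  qed
qed


lemma H2:
  assumes jJ: "j \<in> J" and j'B: "j' \<notin> B" and j'J: "j' \<notin> J"
    and nog: "\<forall>g>0. r j + g *\<^sub>R r j' \<notin> recc S"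
    and g: "g > 0" and t: "t > bnd j" and tg: "t * g > bnd j'"
  shows "xb + t *\<^sub>R (r j + g *\<^sub>R r j') \<notin> S"
proof
  have jB: "j \<notin> B" using jJ by (simp add: J_set_def)
  have jk: "j \<noteq> k" using jJ kJ by blast
  have jj': "j \<noteq> j'" using jJ j'J by blast
  assume "xb + t *\<^sub>R (r j + g *\<^sub>R r j') \<in> S"
  then obtain y \<mu> d where e: "xb + t *\<^sub>R (r j + g *\<^sub>R r j') = xb + y + \<mu> *\<^sub>R r k + d" and y: "A *v y = 0"
    "\<forall>i. i \<notin> B \<longrightarrow> 0 \<le> y $ i \<and> y $ i \<le> bnd i" and \<mu>: "\<mu> \<le> 0" and d: "d \<in> recc C"
    by (rule S_elim)
  have dp: "A *v d = 0" "\<forall>i. i \<notin> B \<longrightarrow> 0 \<le> d $ i" using reccC_props[OF d] by auto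
  have "d = (xb + t *\<^sub>R (r j + g *\<^sub>R r j')) - (xb + y + \<mu> *\<^sub>R r k)" using e by simp
  also have "\<dots> = t *\<^sub>R r j + (t * g) *\<^sub>R r j' - y - \<mu> *\<^sub>R r k" by (simp add: algebra_simps)
  finally have dE: "d = t *\<^sub>R r j + (t * g) *\<^sub>R r j' - y - \<mu> *\<^sub>R r k" .
  have dc: "d $ i = t * (if i = j then 1 else 0) + (t * g) * (if i = j' then 1 else 0)
     - y $ i - \<mu> * (if i = k then 1 else 0)" if "i \<notin> B" for i
    using that kB jB j'B by (simp add: dE rc)
  have z: "\<forall>i. i \<notin> B \<and> i \<notin> {j, j', k} \<longrightarrow> d $ i = 0"
  proof (intro allI impI)
    fix i assume i: "i \<notin> B \<and> i \<notin> {j, j', k}"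
    hence "d $ i = - y $ i" using dc[of i] by simp
    moreover have "0 \<le> d $ i" "0 \<le> y $ i" using dp(2) y(2) i by auto
    ultimately show "d $ i = 0" by linarith
  qed
  have "d $ j = t - y $ j" using dc[OF jB] jk jj' by simp
  moreover have "y $ j \<le> bnd j" using y(2) jB by blast
  ultimately have pos: "d $ j > 0" using t by linarith
  show False
  proof (cases "j' = k")
    case True
    have z': "\<forall>i. i \<notin> B \<and> i \<notin> {j, k} \<longrightarrow> d $ i = 0" using z True by simp
    have dr: "d = (d $ j) *\<^sub>R r j + (d $ k) *\<^sub>R r k" using supp_rep[OF dp(1) _ z'] kB jB jk by simp
    have "d $ k = t * g - y $ k - \<mu>" using dc[OF kB] jk True by simp
    moreover have "y $ k \<le> bnd k" using y(2) kB by blast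
    moreover have "bnd k < t * g" using tg True by simp
    ultimately have posk: "d $ k > 0" using \<mu> by linarith
    have "(1 / d $ j) *\<^sub>R d \<in> recc C" using recc_scale[OF d] pos by simp
    moreover have "(1 / d $ j) *\<^sub>R d = r j + (d $ k / d $ j) *\<^sub>R r k"
      using pos by (subst dr) (simp add: scaleR_add_right)
    ultimately have "r j + (d $ k / d $ j) *\<^sub>R r j' \<in> recc S" using True reccC_reccS by simp
    moreover have "d $ k / d $ j > 0" using pos posk by simp
    ultimately show False using nog by blast
  next
    case False
    have dr: "d = (d $ j) *\<^sub>R r j + ((d $ j') *\<^sub>R r j' + (d $ k) *\<^sub>R r k)"
      using supp_rep[OF dp(1) _ z] kB jB j'B jk jj' False by simp
    have "d $ j' = t * g - y $ j'" using dc[OF j'B] jj' False by simp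
    moreover have "y $ j' \<le> bnd j'" using y(2) j'B by blast
    ultimately have posj': "d $ j' > 0" using tg by linarith
    have dk: "d $ k \<ge> 0" using dp(2) kB by simp
    have "(1 / d $ j) *\<^sub>R d \<in> recc C" using recc_scale[OF d] pos by simp
    moreover have "(1 / d $ j) *\<^sub>R d = (r j + (d $ j' / d $ j) *\<^sub>R r j') + (d $ k / d $ j) *\<^sub>R r k"
      using pos by (subst dr) (simp add: scaleR_add_right)
    ultimately have "(r j + (d $ j' / d $ j) *\<^sub>R r j') + (d $ k / d $ j) *\<^sub>R r k \<in> recc C" by simp
    hence "r j + (d $ j' / d $ j) *\<^sub>R r j' \<in> recc S" by (rule L1) (use pos dk in simp)
    moreover have "d $ j' / d $ j > 0" using pos posj' by simp
    ultimately show False using nog by blast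
  qed
qed

lemma P_closed: "closed P"
proof -
  have 1: "closed {x::real^'n. A *v x = b}"
    by (rule closed_Collect_eq) (auto intro: continuous_intros)
  have 2: "closed {x::real^'n. \<forall>j. j \<notin> B \<longrightarrow> 0 \<le> x $ j}"
  proof (rule closed_Collect_all)
    fix j show "closed {x::real^'n. j \<notin> B \<longrightarrow> 0 \<le> x $ j}"
    proof (cases "j \<in> B")
      case False
      have "closed {x::real^'n. 0 \<le> x $ j}"
        by (rule closed_Collect_le) (auto intro: linear_continuous_on bounded_linear_vec_nth)
      thus ?thesis using False by simp
    qed simp
  qed
  have "P = {x::real^'n. A *v x = b} \<inter> {x::real^'n. \<forall>j. j \<notin> B \<longrightarrow> 0 \<le> x $ j}"
    by (auto simp: basis_relax_def)
  thus ?thesis using 1 2 by (simp add: closed_Int)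
qed

lemma P_convex: "convex P"
  unfolding convex_def
proof (intro ballI allI impI)
  fix x z and u v :: real assume x: "x \<in> P" and z: "z \<in> P" and uv: "0 \<le> u" "0 \<le> v" "u + v = 1"
  have "A *v (u *\<^sub>R x + v *\<^sub>R z) = u *\<^sub>R b + v *\<^sub>R b" using x z
    by (simp add: basis_relax_def matrix_vector_right_distrib matrix_vector_mult_scaleR)
  also have "\<dots> = b" using uv(3) by (metis scaleR_add_left scaleR_one)
  finally have "A *v (u *\<^sub>R x + v *\<^sub>R z) = b" .
  moreover have "0 \<le> (u *\<^sub>R x + v *\<^sub>R z) $ i" if i: "i \<notin> B" for i
  proof -
    have "0 \<le> x $ i" "0 \<le> z $ i" using x z i by (auto simp: basis_relax_def)
    thus ?thesis using uv by simp
  qed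
  ultimately show "u *\<^sub>R x + v *\<^sub>R z \<in> P" by (simp add: basis_relax_def)
qed


lemma main:
  assumes N0: "\<not> N0_set A b B C \<subseteq> J" and M: "M'_set A b B C k = {}"
  shows "closure (convex hull (P - S)) = P"
proof -
  define Q where "Q = closure (convex hull (P - S))"
  have cQ: "closed Q" "convex Q" by (simp_all add: Q_def convex_closure convex_convex_hull)
  have "convex hull (P - S) \<subseteq> P" by (rule hull_minimal[of _ P convex, OF Diff_subset P_convex])
  hence QP: "Q \<subseteq> P" unfolding Q_def by (rule closure_minimal) (rule P_closed)
  have "P - S \<subseteq> convex hull (P - S)" by (rule hull_subset)
  also have "\<dots> \<subseteq> Q" unfolding Q_def by (rule closure_subset)
  finally have PSQ: "P - S \<subseteq> Q" .
  have ray_P: "xb + s *\<^sub>R r j \<in> P" if "j \<notin> B" "0 \<le> s" for j s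
  proof (rule P_intro)
    show "A *v (s *\<^sub>R r j) = 0" by (simp add: matrix_vector_mult_scaleR ray_ker[OF basis that(1)])
    show "\<forall>i. i \<notin> B \<longrightarrow> 0 \<le> (s *\<^sub>R r j) $ i" using that(2) by (simp add: rc[OF that(1)])
  qed
  have dirJ: "x + t *\<^sub>R r j \<in> Q" if jB: "j \<notin> B" and jJ: "j \<notin> J" and x: "x \<in> Q" and t: "0 \<le> t" for j x t
  proof (rule HL[OF cQ _ x t])
    show "\<forall>s\<ge>bnd j + 1. xb + s *\<^sub>R r j \<in> Q"
    proof (intro allI impI)
      fix s assume s: "bnd j + 1 \<le> s"
      hence "0 \<le> s" using bnd_nonneg[of j] by linarith
      hence "xb + s *\<^sub>R r j \<in> P" using ray_P jB by blast
      moreover have "xb + s *\<^sub>R r j \<notin> S" using H1[OF jB jJ] s by simp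
      ultimately show "xb + s *\<^sub>R r j \<in> Q" using PSQ by blast
    qed
  qed
  have dir: "x + t *\<^sub>R r j \<in> Q" if jB: "j \<notin> B" and x: "x \<in> Q" and t: "0 \<le> t" for j x t
  proof (cases "j \<in> J")
    case False thus ?thesis using dirJ jB x t by blast
  next
    case jJ: True
    hence "j \<notin> M'_set A b B C k" using M by simp
    then obtain j' where j': "j' \<notin> B" "j' \<notin> J" and ng: "\<not> gamma' A b B C k j j' > 0"
      using jJ unfolding M'_set_def by blast
    have nog: "\<forall>g>0. r j + g *\<^sub>R r j' \<notin> recc S"
    proof (intro allI impI notI)
      fix g :: real assume g: "g > 0" "r j + g *\<^sub>R r j' \<in> recc S"
      hence "ereal g \<le> gamma' A b B C k j j'" unfolding gamma'_def
        by (intro Sup_upper) auto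
      moreover have "0 < ereal g" using g(1) by simp
      ultimately have "0 < gamma' A b B C k j j'" by (rule less_le_trans[rotated])
      thus False using ng by simp
    qed
    let ?c = "bnd j + bnd j' + 1"
    have cpos: "?c > 0" using bnd_nonneg[of j] bnd_nonneg[of j'] by linarith
    have dg: "x + t *\<^sub>R (r j + g *\<^sub>R r j') \<in> Q" if g: "0 < g" "g \<le> 1" for g
    proof (rule HL[OF cQ _ x t])
      show "\<forall>s\<ge>?c / g. xb + s *\<^sub>R (r j + g *\<^sub>R r j') \<in> Q"
      proof (intro allI impI)
        fix s assume s: "?c / g \<le> s"
        hence sg: "?c \<le> s * g" using g by (simp add: pos_divide_le_eq)
        have "0 < ?c / g" using cpos g by simp
        hence "0 \<le> s" using s by linarith
        hence "s * g \<le> s" using g by (simp add: mult_left_le)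
        hence s1: "s > bnd j" using sg bnd_nonneg[of j'] by linarith
        have s2: "s * g > bnd j'" using sg bnd_nonneg[of j] by linarith
        have "xb + s *\<^sub>R (r j + g *\<^sub>R r j') \<in> P"
          using jB j' \<open>0 \<le> s\<close> g
          by (intro P_intro) (auto simp: matrix_vector_mult_scaleR matrix_vector_right_distrib ray_ker[OF basis] rc)
        moreover have "xb + s *\<^sub>R (r j + g *\<^sub>R r j') \<notin> S"
          by (rule H2[OF jJ j'(1,2) nog g(1) s1 s2])
        ultimately show "xb + s *\<^sub>R (r j + g *\<^sub>R r j') \<in> Q" using PSQ by blast
      qed
    qed
    let ?f = "\<lambda>g::real. x + t *\<^sub>R (r j + g *\<^sub>R r j')"
    have lim: "(?f \<longlongrightarrow> ?f 0) (at_right 0)" by (intro tendsto_intros)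
    have ev: "eventually (\<lambda>g. ?f g \<in> Q) (at_right 0)"
      unfolding eventually_at_right_field
    proof (intro exI[of _ 1] conjI allI impI)
      fix g :: real assume "0 < g" "g < 1"
      thus "?f g \<in> Q" using dg by simp
    qed simp
    have "?f 0 \<in> Q" by (rule Lim_in_closed_set[OF cQ(1) ev _ lim]) simp
    thus ?thesis by simp
  qed
  obtain j0 where j0: "j0 \<in> N0_set A b B C" "j0 \<notin> J" using N0 by blast
  have j0B: "j0 \<notin> B" using j0(1) by (simp add: N0_set_def)
  have a0: "alpha_C C xb (r j0) = \<infinity>" using j0(1) by (simp add: N0_set_def)
  have "j0 \<notin> N2"
  proof
    assume "j0 \<in> N2"
    hence "alpha_C C xb (r j0) < \<infinity>" unfolding N2_set_def Let_def by blast
    thus False using a0 by simp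
  qed
  hence bj0: "bnd j0 = 0" by (simp add: bnd_def)
  have xbQ: "xb \<in> Q"
  proof -
    let ?f = "\<lambda>e::real. xb + e *\<^sub>R r j0"
    have lim: "(?f \<longlongrightarrow> ?f 0) (at_right 0)" by (intro tendsto_intros)
    have ev: "eventually (\<lambda>e. ?f e \<in> Q) (at_right 0)"
      unfolding eventually_at_right_field
    proof (intro exI[of _ 1] conjI allI impI)
      fix e :: real assume e: "0 < e" "e < 1"
      have "?f e \<in> P" using ray_P j0B e by simp
      moreover have "?f e \<notin> S" using H1[OF j0B j0(2)] bj0 e by simp
      ultimately show "?f e \<in> Q" using PSQ by blast
    qed simp
    have "?f 0 \<in> Q" by (rule Lim_in_closed_set[OF cQ(1) ev _ lim]) simp
    thus ?thesis by simp
  qed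
  have PQ: "x \<in> Q" if x: "x \<in> P" for x
  proof -
    have Ax: "A *v (x - xb) = 0" using x xb_props[OF basis]
      by (simp add: basis_relax_def matrix_vector_mult_diff_distrib)
    have rep: "x - xb = (\<Sum>i\<in>-B. ((x - xb) $ i) *\<^sub>R r i)" by (rule ker_rep[OF basis Ax])
    have cnn: "0 \<le> (x - xb) $ i" if "i \<notin> B" for i
      using x that xb_coord[OF that] by (simp add: basis_relax_def)
    have "F \<subseteq> -B \<Longrightarrow> xb + (\<Sum>i\<in>F. ((x - xb) $ i) *\<^sub>R r i) \<in> Q" for F
    proof (induction F rule: infinite_finite_induct)
      case (infinite F) thus ?case by simp
    next
      case empty thus ?case using xbQ by simp
    next
      case (insert a F)
      hence aB: "a \<notin> B" and IH: "xb + (\<Sum>i\<in>F. ((x - xb) $ i) *\<^sub>R r i) \<in> Q" by auto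
      have "(xb + (\<Sum>i\<in>F. ((x - xb) $ i) *\<^sub>R r i)) + ((x - xb) $ a) *\<^sub>R r a \<in> Q"
        by (rule dir[OF aB IH cnn[OF aB]])
      thus ?case using insert.hyps by (simp add: add_ac)
    qed
    hence "xb + (\<Sum>i\<in>-B. ((x - xb) $ i) *\<^sub>R r i) \<in> Q" by blast
    hence "xb + (x - xb) \<in> Q" by (subst rep)
    thus ?thesis by simp
  qed
  show ?thesis unfolding Q_def[symmetric] using QP PQ by blast
qed

end

theorem proposition10:
  fixes A :: "real^'n^'m" and b :: "real^'m" and B :: "'n set"
    and C :: "(real^'n) set" and k :: 'n
  assumes "rank A = CARD('m)"
    and "is_basis A b B"
    and "open C" and "convex C"
    and "basic_solution A b B \<notin> closure C"
    and "recc C \<subseteq> recc (basis_relax A b B)"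
    and "k \<in> N2_set A b B C"
    and "\<not> N0_set A b B C \<subseteq> J_set A b B C k"
    and "M'_set A b B C k = {}"
  shows "closure (convex hull (basis_relax A b B - S_kC A b B C k)) = basis_relax A b B"
proof -
  interpret setting A b B C k using assms by unfold_locales
  show ?thesis by (rule main) (use assms in auto)
qed

end
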